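(* Let $S$ be a quasi-adequate semigroup with an admissible adequate transversal $S^0$. Then for all $x,y\in S$, $e_{xy}=e_x\,e_{\overline{x}f_xe_y\overline{y}}$ and $f_{xy}=f_{\overline{x}f_xe_y\overline{y}}\,f_y$.
   Context: For a semigroup $S$, $S^1$ is $S$ with an identity adjoined, $\mathcal{L},\mathcal{R}$ Green's relations. $\mathcal{R}^\ast=\{(a,b):\forall x,y\in S^1,\ xa=ya\iff xb=yb\}$, $\mathcal{L}^\ast=\{(a,b):\forall x,y\in S^1,\ ax=ay\iff bx=by\}$. $S$ is abundant if each $\mathcal{R}^\ast$- and $\mathcal{L}^\ast$-class contains an idempotent; adequate if also idempotents commute (then $a^+$, $a^\ast$ are the unique idempotents $\mathcal{R}^\ast$-, resp. $\mathcal{L}^\ast$-related to $a$). Quasi-adequate: abundant with the idempotents forming a subsemigroup. An abundant subsemigroup $U$ of abundant $S$ is a $\ast$-subsemigroup if $\mathcal{L}^\ast(U)=\mathcal{L}^\ast(S)\cap(U\times U)$, $\mathcal{R}^\ast(U)=\mathcal{R}^\ast(S)\cap(U\times U)$. An adequate $\ast$-subsemigroup $S^0$ of abundant $S$ is an adequate transversal if each $x\in S$ has a unique $\overline{x}\in S^0$ and idempotents $e,f$ of $S$ with $x=e\overline{x}f$, $e\,\mathcal{L}\,\overline{x}^+$, $f\,\mathcal{R}\,\overline{x}^\ast$; these are unique and written $e_x:=e$, $f_x:=f$. It is admissible if $\overline{xy}=\overline{x}\,\overline{y}$ for all $x,y\in S$. *)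

theory Defs
  imports Main
begin

text \<open>The semigroup S is the whole carrier of a type of class semigroup_mult.
  Elements of S^1 (for a subsemigroup U: of U^1) are modelled as options,
  None being the adjoined identity.\<close>

definition in1 :: "'a set \<Rightarrow> 'a option \<Rightarrow> bool" where
  "in1 U x = (case x of None \<Rightarrow> True | Some z \<Rightarrow> z \<in> U)"

definition lmul :: "'a option \<Rightarrow> 'a \<Rightarrow> 'a::semigroup_mult" where
  "lmul x a = (case x of None \<Rightarrow> a | Some z \<Rightarrow> z * a)"

definition rmul :: "'a::semigroup_mult \<Rightarrow> 'a option \<Rightarrow> 'a" where
  "rmul a x = (case x of None \<Rightarrow> a | Some z \<Rightarrow> a * z)"

definition idem :: "'a::semigroup_mult \<Rightarrow> bool" where
  "idem e \<longleftrightarrow> e * e = e"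

definition greenL :: "'a::semigroup_mult \<Rightarrow> 'a \<Rightarrow> bool" where
  "greenL a b \<longleftrightarrow> (\<exists>x. lmul x a = b) \<and> (\<exists>y. lmul y b = a)"

definition greenR :: "'a::semigroup_mult \<Rightarrow> 'a \<Rightarrow> bool" where
  "greenR a b \<longleftrightarrow> (\<exists>x. rmul a x = b) \<and> (\<exists>y. rmul b y = a)"

definition Rstar_in :: "'a set \<Rightarrow> 'a::semigroup_mult \<Rightarrow> 'a \<Rightarrow> bool" where
  "Rstar_in U a b \<longleftrightarrow> (\<forall>x y. in1 U x \<longrightarrow> in1 U y \<longrightarrow>
      (lmul x a = lmul y a \<longleftrightarrow> lmul x b = lmul y b))"

definition Lstar_in :: "'a set \<Rightarrow> 'a::semigroup_mult \<Rightarrow> 'a \<Rightarrow> bool" where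
  "Lstar_in U a b \<longleftrightarrow> (\<forall>x y. in1 U x \<longrightarrow> in1 U y \<longrightarrow>
      (rmul a x = rmul a y \<longleftrightarrow> rmul b x = rmul b y))"

definition subsemigroup :: "'a::semigroup_mult set \<Rightarrow> bool" where
  "subsemigroup U \<longleftrightarrow> (\<forall>a\<in>U. \<forall>b\<in>U. a * b \<in> U)"

definition abundant_in :: "'a::semigroup_mult set \<Rightarrow> bool" where
  "abundant_in U \<longleftrightarrow> subsemigroup U \<and>
     (\<forall>a\<in>U. (\<exists>e\<in>U. idem e \<and> Rstar_in U a e) \<and> (\<exists>e\<in>U. idem e \<and> Lstar_in U a e))"

definition adequate_in :: "'a::semigroup_mult set \<Rightarrow> bool" where
  "adequate_in U \<longleftrightarrow> abundant_in U \<and>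
     (\<forall>e\<in>U. \<forall>f\<in>U. idem e \<longrightarrow> idem f \<longrightarrow> e * f = f * e)"

definition quasi_adequate :: "'a::semigroup_mult itself \<Rightarrow> bool" where
  "quasi_adequate _ \<longleftrightarrow> abundant_in (UNIV :: 'a set) \<and>
     (\<forall>e f :: 'a. idem e \<longrightarrow> idem f \<longrightarrow> idem (e * f))"

definition star_subsemigroup :: "'a::semigroup_mult set \<Rightarrow> bool" where
  "star_subsemigroup U \<longleftrightarrow> abundant_in U \<and>
     (\<forall>a\<in>U. \<forall>b\<in>U. (Lstar_in U a b \<longleftrightarrow> Lstar_in UNIV a b) \<and>
                   (Rstar_in U a b \<longleftrightarrow> Rstar_in UNIV a b))"

definition plus_in :: "'a set \<Rightarrow> 'a::semigroup_mult \<Rightarrow> 'a" where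
  "plus_in U a = (THE e. e \<in> U \<and> idem e \<and> Rstar_in U a e)"

definition ast_in :: "'a set \<Rightarrow> 'a::semigroup_mult \<Rightarrow> 'a" where
  "ast_in U a = (THE e. e \<in> U \<and> idem e \<and> Lstar_in U a e)"

definition is_decomp :: "'a::semigroup_mult set \<Rightarrow> 'a \<Rightarrow> 'a \<times> 'a \<times> 'a \<Rightarrow> bool" where
  "is_decomp S0 x t \<longleftrightarrow> (case t of (xb, e, f) \<Rightarrow>
     xb \<in> S0 \<and> idem e \<and> idem f \<and> x = e * xb * f \<and>
     greenL e (plus_in S0 xb) \<and> greenR f (ast_in S0 xb))"

definition adequate_transversal :: "'a::semigroup_mult set \<Rightarrow> bool" where
  "adequate_transversal S0 \<longleftrightarrow> adequate_in S0 \<and> star_subsemigroup S0 \<and>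
     (\<forall>x. \<exists>!t. is_decomp S0 x t)"

definition decomp :: "'a::semigroup_mult set \<Rightarrow> 'a \<Rightarrow> 'a \<times> 'a \<times> 'a" where
  "decomp S0 x = (THE t. is_decomp S0 x t)"

definition bar :: "'a::semigroup_mult set \<Rightarrow> 'a \<Rightarrow> 'a" where
  "bar S0 x = fst (decomp S0 x)"

definition ex :: "'a::semigroup_mult set \<Rightarrow> 'a \<Rightarrow> 'a" where
  "ex S0 x = fst (snd (decomp S0 x))"

definition fx :: "'a::semigroup_mult set \<Rightarrow> 'a \<Rightarrow> 'a" where
  "fx S0 x = snd (snd (decomp S0 x))"

definition admissible :: "'a::semigroup_mult set \<Rightarrow> bool" where
  "admissible S0 \<longleftrightarrow> (\<forall>x y. bar S0 (x * y) = bar S0 x * bar S0 y)"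

end

theory Submission
  imports Defs
begin

lemma Rs1: "Rstar_in U a b \<Longrightarrow> g \<in> U \<Longrightarrow> g * a = a \<Longrightarrow> g * b = b"
  unfolding Rstar_in_def
  by (drule spec[of _ "Some g"], drule spec[of _ None]) (simp add: in1_def lmul_def)

lemma Rs2: "Rstar_in U a b \<Longrightarrow> g \<in> U \<Longrightarrow> g * b = b \<Longrightarrow> g * a = a"
  unfolding Rstar_in_def
  by (drule spec[of _ "Some g"], drule spec[of _ None]) (simp add: in1_def lmul_def)

lemma Ls1: "Lstar_in U a b \<Longrightarrow> g \<in> U \<Longrightarrow> a * g = a \<Longrightarrow> b * g = b"
  unfolding Lstar_in_def
  by (drule spec[of _ "Some g"], drule spec[of _ None]) (simp add: in1_def rmul_def)

lemma Ls2: "Lstar_in U a b \<Longrightarrow> g \<in> U \<Longrightarrow> b * g = b \<Longrightarrow> a * g = a"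
  unfolding Lstar_in_def
  by (drule spec[of _ "Some g"], drule spec[of _ None]) (simp add: in1_def rmul_def)

lemma plus_props:
  assumes "adequate_in U" "a \<in> U"
  shows "plus_in U a \<in> U \<and> idem (plus_in U a) \<and> Rstar_in U a (plus_in U a)"
proof -
  have ab: "abundant_in U" using assms(1) by (simp add: adequate_in_def)
  have "\<exists>e\<in>U. idem e \<and> Rstar_in U a e"
    using bspec[OF conjunct2[OF ab[unfolded abundant_in_def]] assms(2)] by simp
  then obtain e where e: "e \<in> U" "idem e" "Rstar_in U a e" by blast
  have uniq: "\<And>e'. e' \<in> U \<and> idem e' \<and> Rstar_in U a e' \<Longrightarrow> e' = e"
  proof -
    fix e' assume h: "e' \<in> U \<and> idem e' \<and> Rstar_in U a e'"
    have "e * a = a" using Rs2[OF e(3) e(1)] e(2) by (simp add: idem_def)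
    hence 1: "e * e' = e'" using Rs1[of U a e' e] h e(1) by simp
    have "e' * a = a" using Rs2[of U a e' e'] h by (simp add: idem_def)
    hence 2: "e' * e = e" using Rs1[OF e(3), of e'] h by simp
    have "e * e' = e' * e" using assms(1) e(1,2) h unfolding adequate_in_def by (meson)
    thus "e' = e" using 1 2 by (metis)
  qed
  have "plus_in U a = e" unfolding plus_in_def
    apply (rule the_equality)
    using e apply (simp only: simp_thms)
    by (rule uniq)
  thus ?thesis using e by simp
qed

lemma ast_props:
  assumes "adequate_in U" "a \<in> U"
  shows "ast_in U a \<in> U \<and> idem (ast_in U a) \<and> Lstar_in U a (ast_in U a)"
proof -
  have ab: "abundant_in U" using assms(1) by (simp add: adequate_in_def)
  have "\<exists>e\<in>U. idem e \<and> Lstar_in U a e"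
    using bspec[OF conjunct2[OF ab[unfolded abundant_in_def]] assms(2)] by simp
  then obtain e where e: "e \<in> U" "idem e" "Lstar_in U a e" by blast
  have uniq: "\<And>e'. e' \<in> U \<and> idem e' \<and> Lstar_in U a e' \<Longrightarrow> e' = e"
  proof -
    fix e' assume h: "e' \<in> U \<and> idem e' \<and> Lstar_in U a e'"
    have "a * e = a" using Ls2[OF e(3) e(1)] e(2) by (simp add: idem_def)
    hence 1: "e' * e = e'" using Ls1[of U a e' e] h e(1) by simp
    have "a * e' = a" using Ls2[of U a e' e'] h by (simp add: idem_def)
    hence 2: "e * e' = e" using Ls1[OF e(3), of e'] h by simp
    have "e * e' = e' * e" using assms(1) e(1,2) h unfolding adequate_in_def by (meson)
    thus "e' = e" using 1 2 by (metis)
  qed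
  have "ast_in U a = e" unfolding ast_in_def
    apply (rule the_equality)
    using e apply (simp only: simp_thms)
    by (rule uniq)
  thus ?thesis using e by simp
qed

lemma lmul_assoc: "lmul x (a * b) = lmul x a * b"
  by (cases x) (simp_all add: lmul_def mult.assoc)

lemma rmul_assoc: "rmul (a * b) x = a * rmul b x"
  by (cases x) (simp_all add: rmul_def mult.assoc)

lemma greenL_idem:
  assumes "idem e" "idem b" "greenL e b" shows "b * e = b \<and> e * b = e"
proof -
  obtain x y where x: "lmul x e = b" and y: "lmul y b = e" using assms(3) greenL_def by blast
  have "b * e = b" using x assms(1) lmul_assoc[of x e e] by (simp add: idem_def)
  moreover have "e * b = e" using y assms(2) lmul_assoc[of y b b] by (simp add: idem_def)
  ultimately show ?thesis by simp
qed

lemma greenR_idem: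
  assumes "idem f" "idem b" "greenR f b" shows "f * b = b \<and> b * f = f"
proof -
  obtain x y where x: "rmul f x = b" and y: "rmul b y = f" using assms(3) greenR_def by blast
  have "f * b = b" using x assms(1) rmul_assoc[of f f x] by (simp add: idem_def)
  moreover have "b * f = f" using y assms(2) rmul_assoc[of b b y] by (simp add: idem_def)
  ultimately show ?thesis by simp
qed

lemma decomp_is: "adequate_transversal S0 \<Longrightarrow> is_decomp S0 z (bar S0 z, ex S0 z, fx S0 z)"
  unfolding adequate_transversal_def bar_def ex_def fx_def decomp_def
  by (metis (no_types, lifting) prod.collapse theI')

lemma decomp_unique: "adequate_transversal S0 \<Longrightarrow> is_decomp S0 z t \<Longrightarrow> decomp S0 z = t"
  unfolding adequate_transversal_def decomp_def
  by (metis the1_equality)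

theorem theorem2p13:
  fixes S0 :: "'a::semigroup_mult set" and x y :: 'a
  assumes "quasi_adequate TYPE('a)"
    and "adequate_transversal S0"
    and "admissible S0"
  shows "ex S0 (x * y) = ex S0 x * ex S0 (bar S0 x * fx S0 x * ex S0 y * bar S0 y) \<and>
         fx S0 (x * y) = fx S0 (bar S0 x * fx S0 x * ex S0 y * bar S0 y) * fx S0 y"
proof -
  have adq: "adequate_in S0" using assms(2) adequate_transversal_def by blast
  have band: "\<And>e f :: 'a. idem e \<Longrightarrow> idem f \<Longrightarrow> idem (e * f)"
    using assms(1) quasi_adequate_def by blast
  have comm: "\<And>e f. e \<in> S0 \<Longrightarrow> f \<in> S0 \<Longrightarrow> idem e \<Longrightarrow> idem f \<Longrightarrow> e * f = f * e"
    using adq adequate_in_def by blast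
  define u where "u = bar S0 x * fx S0 x * ex S0 y * bar S0 y"
  define xb where "xb = bar S0 x"
  define yb where "yb = bar S0 y"
  define ub where "ub = bar S0 u"
  define ex' where "ex' = ex S0 x"
  define fx' where "fx' = fx S0 x"
  define ey where "ey = ex S0 y"
  define fy where "fy = fx S0 y"
  define eu where "eu = ex S0 u"
  define fu where "fu = fx S0 u"
  have dx: "is_decomp S0 x (xb, ex', fx')" using decomp_is[OF assms(2)] xb_def ex'_def fx'_def by simp
  have dy: "is_decomp S0 y (yb, ey, fy)" using decomp_is[OF assms(2)] yb_def ey_def fy_def by simp
  have du: "is_decomp S0 u (ub, eu, fu)" using decomp_is[OF assms(2)] ub_def eu_def fu_def by simp
  have xbS: "xb \<in> S0" and ex: "idem ex'" "idem fx'" "x = ex' * xb * fx'"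
     "greenL ex' (plus_in S0 xb)" using dx unfolding is_decomp_def by auto
  have ybS: "yb \<in> S0" and ey: "idem ey" "idem fy" "y = ey * yb * fy"
     "greenR fy (ast_in S0 yb)" using dy unfolding is_decomp_def by auto
  have ubS: "ub \<in> S0" and eu: "idem eu" "idem fu" "u = eu * ub * fu"
     "greenL eu (plus_in S0 ub)" "greenR fu (ast_in S0 ub)" using du unfolding is_decomp_def by auto
  define xp where "xp = plus_in S0 xb"
  define ya where "ya = ast_in S0 yb"
  define up where "up = plus_in S0 ub"
  define ua where "ua = ast_in S0 ub"
  have xp: "xp \<in> S0" "idem xp" "Rstar_in S0 xb xp" using plus_props[OF adq xbS] xp_def by auto
  have ya: "ya \<in> S0" "idem ya" "Lstar_in S0 yb ya" using ast_props[OF adq ybS] ya_def by auto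
  have up: "up \<in> S0" "idem up" "Rstar_in S0 ub up" using plus_props[OF adq ubS] up_def by auto
  have ua: "ua \<in> S0" "idem ua" "Lstar_in S0 ub ua" using ast_props[OF adq ubS] ua_def by auto
  have xpx: "xp * xb = xb" using Rs2[OF xp(3) xp(1)] xp(2) idem_def by metis
  have yya: "yb * ya = yb" using Ls2[OF ya(3) ya(1)] ya(2) idem_def by metis
  have upu: "up * ub = ub" using Rs2[OF up(3) up(1)] up(2) idem_def by metis
  have uua: "ub * ua = ub" using Ls2[OF ua(3) ua(1)] ua(2) idem_def by metis
  have exL: "xp * ex' = xp" "ex' * xp = ex'" using greenL_idem[OF ex(1) xp(2)] ex(4) xp_def by auto
  have fyR: "fy * ya = ya" "ya * fy = fy" using greenR_idem[OF ey(2) ya(2)] ey(4) ya_def by auto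
  have euL: "up * eu = up" "eu * up = eu" using greenL_idem[OF eu(1) up(2)] eu(4) up_def by auto
  have fuR: "fu * ua = ua" "ua * fu = fu" using greenR_idem[OF eu(2) ua(2)] eu(5) ua_def by auto
  have u_def': "u = xb * fx' * ey * yb" using u_def xb_def fx'_def ey_def yb_def by simp
  have xpu: "xp * u = u" using u_def' xpx by (simp add: mult.assoc[symmetric])
  have uya: "u * ya = u" using u_def' yya by (simp add: mult.assoc)
  have ubeq: "ub = up * u * ua"
  proof -
    have "up * u * ua = up * eu * ub * (fu * ua)" using eu(3) by (simp add: mult.assoc)
    also have "\<dots> = ub" using euL fuR upu uua by (simp add: mult.assoc)
    finally show ?thesis by simp
  qed
  have "xp * ub = ub"
  proof -
    have "xp * ub = (xp * up) * u * ua" using ubeq by (simp add: mult.assoc)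
    also have "\<dots> = up * (xp * u) * ua" using comm[OF xp(1) up(1) xp(2) up(2)] by (simp add: mult.assoc)
    finally show ?thesis using xpu ubeq by simp
  qed
  hence xpup: "xp * up = up" using Rs1[OF up(3) xp(1)] by blast
  have "ub * ya = ub"
  proof -
    have "ub * ya = up * u * (ua * ya)" using ubeq by (simp add: mult.assoc)
    also have "\<dots> = up * (u * ya) * ua" using comm[OF ya(1) ua(1) ya(2) ua(2)] by (simp add: mult.assoc)
    finally show ?thesis using uya ubeq by simp
  qed
  hence uaya: "ua * ya = ua" using Ls1[OF ua(3) ya(1)] by blast
  have upex: "up * ex' = up"
  proof -
    have "up * ex' = up * xp * ex'" using comm[OF xp(1) up(1) xp(2) up(2)] xpup by simp
    thus ?thesis using exL(1) comm[OF xp(1) up(1) xp(2) up(2)] xpup by (simp add: mult.assoc)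
  qed
  have fyua: "fy * ua = ua"
  proof -
    have "fy * ua = fy * ya * ua" using comm[OF ya(1) ua(1) ya(2) ua(2)] uaya by (simp add: mult.assoc)
    thus ?thesis using fyR(1) comm[OF ya(1) ua(1) ya(2) ua(2)] uaya by simp
  qed
  have gL: "greenL (ex' * eu) up"
    unfolding greenL_def
  proof
    show "\<exists>z. lmul z (ex' * eu) = up"
      by (rule exI[of _ "Some up"]) (simp add: lmul_def upex euL mult.assoc[symmetric])
    show "\<exists>z. lmul z up = ex' * eu"
      by (rule exI[of _ "Some (ex' * eu)"]) (simp add: lmul_def mult.assoc euL(2))
  qed
  have gR: "greenR (fu * fy) ua"
    unfolding greenR_def
  proof
    show "\<exists>z. rmul (fu * fy) z = ua"
      by (rule exI[of _ "Some ua"]) (simp add: rmul_def fyua fuR mult.assoc)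
    show "\<exists>z. rmul ua z = fu * fy"
      by (rule exI[of _ "Some (fu * fy)"]) (simp add: rmul_def fuR(2) flip: mult.assoc)
  qed
  have xy: "x * y = (ex' * eu) * ub * (fu * fy)"
  proof -
    have "x * y = ex' * u * fy" using ex(3) ey(3) u_def' by (simp add: mult.assoc)
    also have "\<dots> = (ex' * eu) * ub * (fu * fy)" by (subst eu(3)) (simp add: mult.assoc)
    finally show ?thesis .
  qed
  have "is_decomp S0 (x * y) (ub, ex' * eu, fu * fy)"
    unfolding is_decomp_def using ubS band ex(1) eu(1,2) ey(2) xy gL gR up_def ua_def by auto
  hence "decomp S0 (x * y) = (ub, ex' * eu, fu * fy)" using decomp_unique[OF assms(2)] by blast
  thus ?thesis unfolding ex_def fx_def using ex'_def eu_def u_def fu_def fy_def by (simp add: ex_def fx_def)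
qed

end
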